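(* Let $\vec{\alpha}=\langle\alpha_s:s\in[\mathbb{N}]^{<\infty}\rangle$ be a sequence of nonstandard hypernatural numbers. If $T$ and $S$ are $\vec{\alpha}$-trees, then $S\cap T$ is an $\vec{\alpha}$-tree if and only if either $st(T)\sqsubseteq st(S)\in T$ or $st(S)\sqsubseteq st(T)\in S$.
   Context: Setting (Alpha-Theory of Benci–Di Nasso): ZFC together with a new symbol $\alpha$ satisfying: ($\alpha$1) every sequence $\varphi=\langle\varphi_i:i\in\mathbb{N}\rangle$ has a unique ideal value $\varphi[\alpha]$; ($\alpha$2) if $\varphi[\alpha]=\psi[\alpha]$ and $f\circ\varphi$, $f\circ\psi$ make sense then $(f\circ\varphi)[\alpha]=(f\circ\psi)[\alpha]$; ($\alpha$3) constant real sequences $r$ have ideal value $r$, and $\langle i\rangle$ has ideal value $\alpha\notin\mathbb{N}$; ($\alpha$4) if $\vartheta_i=\{\varphi_i,\psi_i\}$ then $\vartheta[\alpha]=\{\varphi[\alpha],\psi[\alpha]\}$; ($\alpha$5) the constant sequence $\emptyset$ has ideal value $\emptyset$, and for nonempty $\psi_i$, $\psi[\alpha]=\{\vartheta[\alpha]:\vartheta_i\in\psi_i\ \forall i\}$. ${}^*A$ is the ideal value of the constant sequence $A$; elements of ${}^*\mathbb{N}\setminus\mathbb{N}$ are nonstandard hypernatural numbers. For finite $s,t\subseteq\mathbb{N}$, $s\sqsubseteq t$ means $s=\{j\in t:j\le i\}$ for some $i$. A tree on $\mathbb{N}$ is a nonempty $T\subseteq[\mathbb{N}]^{<\infty}$ closed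 under $\sqsubseteq$-initial segments; stem $st(T)$ = $\sqsubseteq$-maximal $s\in T$ comparable with all elements of $T$ (if it exists); $T/s=\{t\in T:s\sqsubseteq t\}$. An $\vec{\alpha}$-tree is a tree $T$ with a stem, $T/st(T)\neq\emptyset$, and $s\cup\{\alpha_s\}\in{}^*T$ for all $s\in T/st(T)$. *)

theory Defs
  imports Main
begin

(* Alpha-theory is modelled by an ultrapower: alpha corresponds to a nonprincipal
   ultrafilter U on nat (U = {A. alpha in *A}); a hypernatural is represented by
   a sequence nat => nat, taken modulo U. *)

definition is_ultrafilter :: "nat filter \<Rightarrow> bool" where
  "is_ultrafilter U \<longleftrightarrow> U \<noteq> bot \<and> (\<forall>P. eventually P U \<or> eventually (\<lambda>x. \<not> P x) U)"

definition nonprincipal :: "nat filter \<Rightarrow> bool" where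
  "nonprincipal U \<longleftrightarrow> (\<forall>n. eventually (\<lambda>i. i \<noteq> n) U)"

definition nonstd :: "nat filter \<Rightarrow> (nat \<Rightarrow> nat) \<Rightarrow> bool" where
  "nonstd U f \<longleftrightarrow> (\<forall>n. eventually (\<lambda>i. f i \<noteq> n) U)"

definition initseg :: "nat set \<Rightarrow> nat set \<Rightarrow> bool" where
  "initseg s t \<longleftrightarrow> (\<exists>i. s = {j \<in> t. j \<le> i})"

definition comparable :: "nat set \<Rightarrow> nat set \<Rightarrow> bool" where
  "comparable s t \<longleftrightarrow> initseg s t \<or> initseg t s"

definition is_tree :: "nat set set \<Rightarrow> bool" where
  "is_tree T \<longleftrightarrow> T \<noteq> {} \<and> (\<forall>t\<in>T. finite t) \<and>
     (\<forall>t\<in>T. \<forall>s. initseg s t \<longrightarrow> s \<in> T)"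

definition comp_all :: "nat set set \<Rightarrow> nat set \<Rightarrow> bool" where
  "comp_all T s \<longleftrightarrow> s \<in> T \<and> (\<forall>t\<in>T. comparable s t)"

definition is_stem :: "nat set set \<Rightarrow> nat set \<Rightarrow> bool" where
  "is_stem T s \<longleftrightarrow> comp_all T s \<and> \<not> (\<exists>s'. comp_all T s' \<and> initseg s s' \<and> s' \<noteq> s)"

definition stem :: "nat set set \<Rightarrow> nat set" where
  "stem T = (THE s. is_stem T s)"

definition subtree_above :: "nat set set \<Rightarrow> nat set \<Rightarrow> nat set set" where
  "subtree_above T s = {t \<in> T. initseg s t}"

(* x \<union> {alpha_s} \<in> *T, where alpha_s is represented by the sequence f:
   the ideal value of \<langle>x \<union> {f i}\<rangle> lies in *T iff U-almost all x \<union> {f i} lie in T *)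
definition star_mem :: "nat filter \<Rightarrow> nat set set \<Rightarrow> nat set \<Rightarrow> (nat \<Rightarrow> nat) \<Rightarrow> bool" where
  "star_mem U T s f \<longleftrightarrow> eventually (\<lambda>i. insert (f i) s \<in> T) U"

definition alpha_tree :: "nat filter \<Rightarrow> (nat set \<Rightarrow> nat \<Rightarrow> nat) \<Rightarrow> nat set set \<Rightarrow> bool" where
  "alpha_tree U \<alpha> T \<longleftrightarrow> is_tree T \<and> (\<exists>s. is_stem T s) \<and>
     subtree_above T (stem T) \<noteq> {} \<and>
     (\<forall>s \<in> subtree_above T (stem T). star_mem U T s (\<alpha> s))"

end

theory Submission
  imports Defs
begin

lemma initseg_sub: "initseg s t \<Longrightarrow> s \<subseteq> t" by (auto simp: initseg_def)

lemma initseg_refl: "finite s \<Longrightarrow> initseg s s"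
  unfolding initseg_def by (rule exI[of _ "Max s"]) auto

lemma initseg_trans: "initseg a b \<Longrightarrow> initseg b c \<Longrightarrow> initseg a c"
  unfolding initseg_def
proof -
  assume "\<exists>i. a = {j \<in> b. j \<le> i}" "\<exists>i. b = {j \<in> c. j \<le> i}"
  then obtain i k where "a = {j \<in> b. j \<le> i}" "b = {j \<in> c. j \<le> k}" by blast
  then have "a = {j \<in> c. j \<le> min i k}" by auto
  then show "\<exists>i. a = {j \<in> c. j \<le> i}" by blast
qed

lemma initseg_comp: "initseg a c \<Longrightarrow> initseg b c \<Longrightarrow> comparable a b"
proof -
  assume "initseg a c" "initseg b c"
  then obtain i k where a: "a = {j \<in> c. j \<le> i}" and b: "b = {j \<in> c. j \<le> k}"
    by (auto simp: initseg_def)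
  show ?thesis
  proof (cases "i \<le> k")
    case True
    then have "a = {j \<in> b. j \<le> i}" using a b by auto
    then show ?thesis by (auto simp: comparable_def initseg_def)
  next
    case False
    then have "b = {j \<in> a. j \<le> k}" using a b by auto
    then show ?thesis by (auto simp: comparable_def initseg_def)
  qed
qed

lemma comparable_sym: "comparable a b \<Longrightarrow> comparable b a"
  by (auto simp: comparable_def)

lemma stem_unique: assumes "is_stem T s" shows "stem T = s"
  unfolding stem_def
proof (rule the_equality)
  show "is_stem T s" by fact
  fix s' assume s': "is_stem T s'"
  have "s' \<in> T" "s \<in> T" using s' assms by (auto simp: is_stem_def comp_all_def)
  then have c: "comparable s s'" using assms by (auto simp: is_stem_def comp_all_def)
  show "s' = s"
  proof (cases "initseg s s'")
    case True then show ?thesis using assms s' by (auto simp: is_stem_def)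
  next
    case False then have "initseg s' s" using c by (auto simp: comparable_def)
    then show ?thesis using assms s' by (auto simp: is_stem_def)
  qed
qed

lemma nonstd_gt: "nonstd U f \<Longrightarrow> eventually (\<lambda>i. n < f i) U"
proof (induction n)
  case 0
  then have "eventually (\<lambda>i. f i \<noteq> 0) U" unfolding nonstd_def by blast
  then show ?case by (rule eventually_mono) auto
next
  case (Suc n)
  have "eventually (\<lambda>i. n < f i) U" using Suc by blast
  moreover have "eventually (\<lambda>i. f i \<noteq> Suc n) U" using Suc.prems unfolding nonstd_def by blast
  ultimately have "eventually (\<lambda>i. n < f i \<and> f i \<noteq> Suc n) U"
    by (rule eventually_conj)
  then show ?case by (rule eventually_mono) auto
qed

lemma keyL:
  assumes "initseg r t" "r \<noteq> t" "\<forall>x\<in>r. x < a" "comparable (insert a r) t"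
  shows "a = (LEAST x. x \<in> t - r)"
proof -
  have rt: "r \<subseteq> t" using assms(1) by (rule initseg_sub)
  have "a \<in> t - r \<and> (\<forall>y \<in> t - r. a \<le> y)"
  proof (cases "initseg (insert a r) t")
    case True
    then obtain k where k: "insert a r = {j \<in> t. j \<le> k}" by (auto simp: initseg_def)
    have "a \<in> t" "a \<le> k" using k by auto
    moreover have "a \<notin> r" using assms(3) by auto
    moreover have "a \<le> y" if "y \<in> t - r" for y
    proof (rule ccontr)
      assume "\<not> a \<le> y"
      then have "y \<le> k" using \<open>a \<le> k\<close> by auto
      then have "y \<in> insert a r" using k that by auto
      then show False using that \<open>\<not> a \<le> y\<close> by auto
    qed
    ultimately show ?thesis by auto
  next
    case False
    then have "initseg t (insert a r)" using assms(4) by (auto simp: comparable_def)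
    then have "t \<subseteq> insert a r" by (rule initseg_sub)
    then have "t - r \<subseteq> {a}" by auto
    moreover have "t - r \<noteq> {}" using rt assms(2) by auto
    ultimately show ?thesis by auto
  qed
  then show ?thesis by (intro Least_equality[symmetric]) auto
qed

lemma branch:
  assumes "U \<noteq> bot" "nonstd U f" "finite r" "initseg r t" "r \<noteq> t"
    and "eventually (\<lambda>i. comparable (insert (f i) r) t) U"
  shows False
proof -
  have e1: "eventually (\<lambda>i. Max r < f i) U" using assms(2) by (rule nonstd_gt)
  have e2: "eventually (\<lambda>i. f i \<noteq> (LEAST x. x \<in> t - r)) U"
    using assms(2) by (auto simp: nonstd_def)
  have "eventually (\<lambda>i. False) U"
    using eventually_conj[OF e1 eventually_conj[OF e2 assms(6)]]
  proof (rule eventually_mono)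
    fix i assume h: "Max r < f i \<and> f i \<noteq> (LEAST x. x \<in> t - r) \<and> comparable (insert (f i) r) t"
    have "\<forall>x\<in>r. x < f i" using h assms(3) Max_ge[OF assms(3)] le_less_trans by blast
    then show False using keyL[OF assms(4,5)] h by blast
  qed
  then show False using assms(1) by (simp add: eventually_False)
qed

lemma alpha_tree_facts:
  assumes "alpha_tree U \<alpha> T"
  shows "is_tree T" "is_stem T (stem T)"
    "\<And>s. s \<in> T \<Longrightarrow> initseg (stem T) s \<Longrightarrow> eventually (\<lambda>i. insert (\<alpha> s i) s \<in> T) U"
proof -
  show "is_tree T" using assms by (auto simp: alpha_tree_def)
  obtain s where "is_stem T s" using assms by (auto simp: alpha_tree_def)
  then show "is_stem T (stem T)" using stem_unique by simp
  fix s assume "s \<in> T" "initseg (stem T) s"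
  then show "eventually (\<lambda>i. insert (\<alpha> s i) s \<in> T) U" using assms
    by (auto simp: alpha_tree_def subtree_above_def star_mem_def)
qed

lemma stem_below:
  assumes "U \<noteq> bot" "\<forall>s. finite s \<longrightarrow> nonstd U (\<alpha> s)" "alpha_tree U \<alpha> A" "A \<subseteq> B"
    "comp_all B b"
  shows "initseg b (stem A)"
proof -
  let ?r = "stem A"
  note F = alpha_tree_facts[OF assms(3)]
  have rA: "?r \<in> A" using F(2) by (auto simp: is_stem_def comp_all_def)
  have fin: "finite ?r" using F(1) rA by (auto simp: is_tree_def)
  have c: "comparable b ?r" using assms(4,5) rA by (auto simp: comp_all_def)
  have ev: "eventually (\<lambda>i. insert (\<alpha> ?r i) ?r \<in> A) U"
    using F(3)[OF rA initseg_refl[OF fin]] .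
  show ?thesis
  proof (rule ccontr)
    assume n: "\<not> initseg b ?r"
    then have "initseg ?r b" using c by (auto simp: comparable_def)
    moreover have "?r \<noteq> b" using n initseg_refl[OF fin] by auto
    moreover have "eventually (\<lambda>i. comparable (insert (\<alpha> ?r i) ?r) b) U"
      using ev by (rule eventually_mono) (use assms(4,5) in \<open>auto simp: comp_all_def intro: comparable_sym\<close>)
    ultimately show False using branch[OF assms(1) _ fin] assms(2) fin by blast
  qed
qed

lemma back_dir:
  assumes "U \<noteq> bot" "\<forall>s. finite s \<longrightarrow> nonstd U (\<alpha> s)" "alpha_tree U \<alpha> T" "alpha_tree U \<alpha> S"
    "initseg (stem T) (stem S)" "stem S \<in> T"
  shows "alpha_tree U \<alpha> (S \<inter> T)"
proof -
  let ?sS = "stem S" and ?sT = "stem T"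
  note FT = alpha_tree_facts[OF assms(3)]
  note FS = alpha_tree_facts[OF assms(4)]
  have sSS: "?sS \<in> S" using FS(2) by (auto simp: is_stem_def comp_all_def)
  have fin: "finite ?sS" using FS(1) sSS by (auto simp: is_tree_def)
  have ca: "comp_all (S \<inter> T) ?sS" using FS(2) assms(6) by (auto simp: is_stem_def comp_all_def)
  have evI: "eventually (\<lambda>i. insert (\<alpha> ?sS i) ?sS \<in> S \<inter> T) U"
    using eventually_conj[OF FS(3)[OF sSS initseg_refl[OF fin]] FT(3)[OF assms(6,5)]] by simp
  have st: "is_stem (S \<inter> T) ?sS"
    unfolding is_stem_def
  proof (intro conjI notI ca)
    assume "\<exists>s'. comp_all (S \<inter> T) s' \<and> initseg ?sS s' \<and> s' \<noteq> ?sS"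
    then obtain s' where s': "comp_all (S \<inter> T) s'" "initseg ?sS s'" "s' \<noteq> ?sS" by blast
    have "eventually (\<lambda>i. comparable (insert (\<alpha> ?sS i) ?sS) s') U"
      using evI by (rule eventually_mono) (use s'(1) in \<open>auto simp: comp_all_def intro: comparable_sym\<close>)
    then show False using branch[OF assms(1) _ fin s'(2)] s'(3) assms(2) fin by auto
  qed
  then have stem_eq: "stem (S \<inter> T) = ?sS" by (rule stem_unique)
  have tree: "is_tree (S \<inter> T)" using FS(1) FT(1) sSS assms(6)
    unfolding is_tree_def by blast
  show ?thesis
    unfolding alpha_tree_def stem_eq
  proof (intro conjI tree exI[of _ ?sS] st ballI)
    show "subtree_above (S \<inter> T) ?sS \<noteq> {}"
      using sSS assms(6) initseg_refl[OF fin] by (auto simp: subtree_above_def)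
    fix s assume "s \<in> subtree_above (S \<inter> T) ?sS"
    then have s: "s \<in> S" "s \<in> T" "initseg ?sS s" by (auto simp: subtree_above_def)
    have "initseg ?sT s" using initseg_trans[OF assms(5) s(3)] .
    then show "star_mem U (S \<inter> T) s (\<alpha> s)"
      unfolding star_mem_def using eventually_conj[OF FS(3)[OF s(1,3)] FT(3)[OF s(2)]] by simp
  qed
qed

theorem mainTheorem16:
  fixes U :: "nat filter" and \<alpha> :: "nat set \<Rightarrow> nat \<Rightarrow> nat" and S T :: "nat set set"
  assumes "is_ultrafilter U" and "nonprincipal U"
    and "\<forall>s. finite s \<longrightarrow> nonstd U (\<alpha> s)"
    and "alpha_tree U \<alpha> T" and "alpha_tree U \<alpha> S"
  shows "alpha_tree U \<alpha> (S \<inter> T) \<longleftrightarrow>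
    ((initseg (stem T) (stem S) \<and> stem S \<in> T) \<or> (initseg (stem S) (stem T) \<and> stem T \<in> S))"
proof
  have U: "U \<noteq> bot" using assms(1) by (simp add: is_ultrafilter_def)
  note FT = alpha_tree_facts[OF assms(4)]
  note FS = alpha_tree_facts[OF assms(5)]
  assume A: "alpha_tree U \<alpha> (S \<inter> T)"
  let ?r = "stem (S \<inter> T)"
  have rI: "?r \<in> S \<inter> T" using alpha_tree_facts(2)[OF A] by (auto simp: is_stem_def comp_all_def)
  have a: "initseg (stem S) ?r"
    using stem_below[OF U assms(3) A _ ] FS(2) by (auto simp: is_stem_def)
  have b: "initseg (stem T) ?r"
    using stem_below[OF U assms(3) A _ ] FT(2) by (auto simp: is_stem_def)
  have "comparable (stem T) (stem S)" using initseg_comp[OF b a] .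
  moreover have "initseg (stem S) ?r \<Longrightarrow> stem S \<in> T" using rI FT(1) by (auto simp: is_tree_def)
  moreover have "initseg (stem T) ?r \<Longrightarrow> stem T \<in> S" using rI FS(1) by (auto simp: is_tree_def)
  ultimately show "(initseg (stem T) (stem S) \<and> stem S \<in> T) \<or> (initseg (stem S) (stem T) \<and> stem T \<in> S)"
    using a b by (auto simp: comparable_def)
next
  have U: "U \<noteq> bot" using assms(1) by (simp add: is_ultrafilter_def)
  assume "(initseg (stem T) (stem S) \<and> stem S \<in> T) \<or> (initseg (stem S) (stem T) \<and> stem T \<in> S)"
  then show "alpha_tree U \<alpha> (S \<inter> T)"
  proof
    assume "initseg (stem T) (stem S) \<and> stem S \<in> T"
    then show ?thesis using back_dir[OF U assms(3) assms(4,5)] by blast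
  next
    assume "initseg (stem S) (stem T) \<and> stem T \<in> S"
    then have "alpha_tree U \<alpha> (T \<inter> S)" using back_dir[OF U assms(3) assms(5,4)] by blast
    then show ?thesis by (simp add: Int_commute)
  qed
qed

end
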